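(* Let $n$ be a positive integer. Then $\mathsf{NAADT}(\mathsf{OMB}_n) = n$ and $\mathsf{D}_{\mathrm{cc}}^\rightarrow(\mathsf{OMB}_n \circ \mathsf{AND}) = \lceil\log(n + 1)\rceil$.
   Context: $\mathsf{OMB}_n:\{0,1\}^n\to\{0,1\}$ is defined by $\mathsf{OMB}_n(x)=1$ if $\max\{i\in[n]:x_i=0\}$ is odd and $0$ otherwise, with $\mathsf{OMB}_n(1^n)=0$. $\mathsf{AND}_S(x)=\prod_{i\in S}x_i$. $\mathsf{NAADT}(f)$ is the minimum $k$ for which there exist $S_1,\dots,S_k\subseteq[n]$ such that $f(x)$ is determined by $\mathsf{AND}_{S_1}(x),\dots,\mathsf{AND}_{S_k}(x)$ for all $x$. $f\circ\mathsf{AND}$ is the two-party function $(x,y)\mapsto f(x_1\wedge y_1,\dots,x_n\wedge y_n)$ (Alice holds $x$, Bob $y$); $\mathsf{D}_{\mathrm{cc}}^\rightarrow$ is deterministic one-way communication complexity. Logarithms are base 2. *)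

theory Defs
  imports Complex_Main
begin

text \<open>Inputs in {0,1}^n are bool lists of length n; coordinate x_i (i in [n] = {1..n})
  is xs ! (i - 1); True = 1, False = 0.\<close>

definition cube :: "nat \<Rightarrow> bool list set" where
  "cube n = {xs. length xs = n}"

definition OMB :: "nat \<Rightarrow> bool list \<Rightarrow> bool" where
  "OMB n xs = (if (\<forall>i\<in>{1..n}. xs ! (i - 1)) then False
               else odd (Max {i \<in> {1..n}. \<not> xs ! (i - 1)}))"

definition AND_S :: "nat set \<Rightarrow> bool list \<Rightarrow> bool" where
  "AND_S S xs = (\<forall>i\<in>S. xs ! (i - 1))"

definition NAADT :: "nat \<Rightarrow> (bool list \<Rightarrow> bool) \<Rightarrow> nat" where
  "NAADT n f = (LEAST k. \<exists>S :: nat \<Rightarrow> nat set.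
      (\<forall>j<k. S j \<subseteq> {1..n}) \<and>
      (\<forall>x\<in>cube n. \<forall>y\<in>cube n. (\<forall>j<k. AND_S (S j) x = AND_S (S j) y) \<longrightarrow> f x = f y))"

definition D_oneway :: "'a set \<Rightarrow> 'b set \<Rightarrow> ('a \<Rightarrow> 'b \<Rightarrow> bool) \<Rightarrow> nat" where
  "D_oneway X Y F = (LEAST c. \<exists>(M :: 'a \<Rightarrow> bool list) (Out :: bool list \<Rightarrow> 'b \<Rightarrow> bool).
      \<forall>x\<in>X. length (M x) = c \<and> (\<forall>y\<in>Y. Out (M x) y = F x y))"

definition comp_AND :: "(bool list \<Rightarrow> bool) \<Rightarrow> bool list \<Rightarrow> bool list \<Rightarrow> bool" where
  "comp_AND f xs ys = f (map2 (\<and>) xs ys)"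

end

theory Submission
  imports Defs
begin

definition mz :: "nat \<Rightarrow> bool list \<Rightarrow> nat" where
  "mz n x = Max ({0} \<union> {i\<in>{1..n}. \<not> x ! (i - 1)})"

definition ww :: "nat \<Rightarrow> nat \<Rightarrow> bool list" where
  "ww n t = map (\<lambda>i. t < i) [1..<n+1]"

lemma ww_cube: "ww n t \<in> cube n"
  by (simp add: ww_def cube_def)

lemma ww_nth0[simp]: "i < n \<Longrightarrow> ww n t ! i = (t < Suc i)"
  by (simp add: ww_def del: upt_Suc)

lemma ww_nth: "i \<in> {1..n} \<Longrightarrow> ww n t ! (i - 1) = (t < i)"
  by auto

lemma OMB_mz: "OMB n x = odd (mz n x)"
proof (cases "\<forall>i\<in>{1..n}. x ! (i - 1)")
  case True
  then have e: "{i\<in>{1..n}. \<not> x ! (i - 1)} = {}" by auto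
  have "mz n x = 0" unfolding mz_def by (simp only: e) simp
  then show ?thesis using True by (simp add: OMB_def)
next
  case False
  then have ne: "{i\<in>{1..n}. \<not> x ! (i - 1)} \<noteq> {}" by auto
  have "mz n x = max 0 (Max {i\<in>{1..n}. \<not> x ! (i - 1)})"
    unfolding mz_def by (subst Max_Un) (use ne in auto)
  moreover have "OMB n x = odd (Max {i\<in>{1..n}. \<not> x ! (i - 1)})"
    unfolding OMB_def by (simp only: False if_False)
  ultimately show ?thesis by simp
qed

lemma mz_ww: "t \<le> n \<Longrightarrow> mz n (ww n t) = t"
proof -
  assume t: "t \<le> n"
  have e: "{0} \<union> {i\<in>{1..n}. \<not> ww n t ! (i - 1)} = {0..t}"
    using t by auto
  show ?thesis unfolding mz_def e by (rule Max_eqI) auto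
qed

lemma mz_and:
  assumes "x \<in> cube n" "y \<in> cube n"
  shows "mz n (map2 (\<and>) x y) = max (mz n x) (mz n y)"
proof -
  have "{0} \<union> {i\<in>{1..n}. \<not> (map2 (\<and>) x y) ! (i - 1)}
      = ({0} \<union> {i\<in>{1..n}. \<not> x ! (i - 1)}) \<union> ({0} \<union> {i\<in>{1..n}. \<not> y ! (i - 1)})"
    using assms by (auto simp: cube_def)
  then have "mz n (map2 (\<and>) x y) = Max (({0} \<union> {i\<in>{1..n}. \<not> x ! (i - 1)}) \<union> ({0} \<union> {i\<in>{1..n}. \<not> y ! (i - 1)}))"
    unfolding mz_def by (simp only:)
  also have "\<dots> = max (mz n x) (mz n y)" unfolding mz_def by (rule Max_Un) auto
  finally show ?thesis .
qed

lemma comp_mz: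
  assumes "x \<in> cube n" "y \<in> cube n"
  shows "comp_AND (OMB n) x y = odd (max (mz n x) (mz n y))"
  using assms by (simp add: comp_AND_def OMB_mz mz_and)

lemma AND_ww:
  assumes "S \<subseteq> {1..n}"
  shows "AND_S S (ww n t) = (\<forall>i\<in>S. t < i)"
proof -
  have "AND_S S (ww n t) = (\<forall>i\<in>S. ww n t ! (i - 1))" by (simp add: AND_S_def)
  also have "\<dots> = (\<forall>i\<in>S. t < i)"
    using assms ww_nth[of _ n t] by (metis subsetD)
  finally show ?thesis .
qed

lemma card_bool_lists: "card {xs :: bool list. length xs = c} = 2 ^ c"
proof -
  have "card {xs :: bool list. set xs \<subseteq> UNIV \<and> length xs = c} = card (UNIV :: bool set) ^ c"
    by (rule card_lists_length_eq) simp
  then show ?thesis by simp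
qed

lemma fin_bool_lists: "finite {xs :: bool list. length xs = c}"
proof -
  have "finite {xs :: bool list. set xs \<subseteq> UNIV \<and> length xs = c}"
    by (rule finite_lists_length_eq) simp
  then show ?thesis by simp
qed

lemma NAADT_part:
  assumes "n \<ge> 1"
  shows "NAADT n (OMB n) = n"
  unfolding NAADT_def
proof (rule Least_equality)
  show "\<exists>S :: nat \<Rightarrow> nat set. (\<forall>j<n. S j \<subseteq> {1..n}) \<and>
      (\<forall>x\<in>cube n. \<forall>y\<in>cube n. (\<forall>j<n. AND_S (S j) x = AND_S (S j) y) \<longrightarrow> OMB n x = OMB n y)"
  proof (intro exI[of _ "\<lambda>j. {j+1}"] conjI ballI impI allI)
    fix j assume "j < n" then show "{j+1} \<subseteq> {1..n}" by auto
  next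
    fix x y assume x: "x \<in> cube n" and y: "y \<in> cube n"
      and h: "\<forall>j<n. AND_S {j+1} x = AND_S {j+1} y"
    have "x = y"
    proof (rule nth_equalityI)
      show "length x = length y" using x y by (simp add: cube_def)
      fix i assume "i < length x"
      then show "x ! i = y ! i" using h x by (auto simp: AND_S_def cube_def)
    qed
    then show "OMB n x = OMB n y" by simp
  qed
next
  fix k assume "\<exists>S :: nat \<Rightarrow> nat set. (\<forall>j<k. S j \<subseteq> {1..n}) \<and>
      (\<forall>x\<in>cube n. \<forall>y\<in>cube n. (\<forall>j<k. AND_S (S j) x = AND_S (S j) y) \<longrightarrow> OMB n x = OMB n y)"
  then obtain S :: "nat \<Rightarrow> nat set" where Ssub: "\<forall>j<k. S j \<subseteq> {1..n}"
    and Sdet: "\<forall>x\<in>cube n. \<forall>y\<in>cube n. (\<forall>j<k. AND_S (S j) x = AND_S (S j) y) \<longrightarrow> OMB n x = OMB n y"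
    by blast
  show "n \<le> k"
  proof (rule ccontr)
    assume "\<not> n \<le> k"
    then have kn: "k < n" by simp
    define A where "A = (\<lambda>j. Min (S j)) ` {j. j < k \<and> S j \<noteq> {}}"
    have "card A \<le> card {j. j < k \<and> S j \<noteq> {}}"
      unfolding A_def by (rule card_image_le) simp
    also have "\<dots> \<le> card {..<k}" by (rule card_mono) auto
    finally have cA: "card A < n" using kn by simp
    have "\<not> {1..n} \<subseteq> A"
    proof
      assume "{1..n} \<subseteq> A"
      then have "card {1..n} \<le> card A"
        by (rule card_mono[rotated]) (simp add: A_def)
      then show False using cA by simp
    qed
    then obtain m where m: "m \<in> {1..n}" "m \<notin> A" by blast
    have eq: "AND_S (S j) (ww n (m-1)) = AND_S (S j) (ww n m)" if j: "j < k" for j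
    proof -
      have sub: "S j \<subseteq> {1..n}" using Ssub j by blast
      have fin: "finite (S j)" using sub finite_subset by blast
      have "(\<forall>i\<in>S j. m - 1 < i) = (\<forall>i\<in>S j. m < i)"
      proof (cases "m \<in> S j \<and> (\<forall>i\<in>S j. m \<le> i)")
        case True
        then have "Min (S j) = m" using fin by (intro Min_eqI) auto
        then have "m \<in> A" using True j unfolding A_def by blast
        then show ?thesis using m by blast
      next
        case False
        show ?thesis
        proof
          assume L: "\<forall>i\<in>S j. m - 1 < i"
          then have L': "\<forall>i\<in>S j. m \<le> i" using m(1) by auto
          then have "m \<notin> S j" using False by blast
          then show "\<forall>i\<in>S j. m < i" using L' by (metis le_neq_implies_less)
        next
          assume "\<forall>i\<in>S j. m < i"
          then show "\<forall>i\<in>S j. m - 1 < i" by auto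
        qed
      qed
      then show ?thesis using sub by (simp add: AND_ww)
    qed
    have "OMB n (ww n (m-1)) = OMB n (ww n m)"
      using Sdet ww_cube eq by blast
    moreover have "mz n (ww n (m-1)) = m - 1" using m by (intro mz_ww) auto
    moreover have "mz n (ww n m) = m" using m by (intro mz_ww) auto
    ultimately have "odd (m - 1) = odd m" by (simp add: OMB_mz)
    then show False using m by (cases m) auto
  qed
qed

lemma ceil_log_eq:
  fixes c n :: nat
  assumes "2 ^ (c - 1) < n + 1" "n + 1 \<le> 2 ^ c" "c \<ge> 1"
  shows "\<lceil>log 2 (real n + 1)\<rceil> = int c"
proof -
  have a0: "log 2 (real (n + 1)) \<le> real c"
    by (rule log2_of_power_le) (use assms(2) in auto)
  have b0: "real (c - 1) < log 2 (real (n + 1))"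
    by (rule less_log2_of_power) (use assms(1) in auto)
  have r: "real (n + 1) = real n + 1" by simp
  have rc: "real (c - 1) = real c - 1" using assms(3) by simp
  have a: "log 2 (real n + 1) \<le> real_of_int (int c)" using a0 by (simp only: r of_int_of_nat_eq)
  have b: "real_of_int (int c) - 1 < log 2 (real n + 1)" using b0 by (simp only: r rc of_int_of_nat_eq)
  show ?thesis using a b by (simp only: ceiling_eq_iff)
qed

lemma D_part:
  assumes "n \<ge> 1"
  shows "int (D_oneway (cube n) (cube n) (comp_AND (OMB n))) = \<lceil>log 2 (real n + 1)\<rceil>"
proof -
  define c where "c = (LEAST c. n + 1 \<le> (2::nat) ^ c)"
  have ex: "n + 1 \<le> (2::nat) ^ (n+1)"
    using less_exp[of "n+1"] by simp
  have c2: "n + 1 \<le> (2::nat) ^ c" unfolding c_def by (rule LeastI[of "\<lambda>c. n+1 \<le> (2::nat)^c", OF ex])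
  have c1: "c \<ge> 1"
  proof (rule ccontr)
    assume "\<not> c \<ge> 1" then have "c = 0" by simp
    then show False using c2 assms by simp
  qed
  have c3: "\<not> n + 1 \<le> (2::nat) ^ (c - 1)"
    unfolding c_def by (rule not_less_Least) (use c1 c_def in simp)
  have "D_oneway (cube n) (cube n) (comp_AND (OMB n)) = c"
    unfolding D_oneway_def
  proof (rule Least_equality)
    have "card {0..n} \<le> card {xs :: bool list. length xs = c}"
      using c2 by (simp add: card_bool_lists)
    then obtain e where e: "e ` {0..n} \<subseteq> {xs :: bool list. length xs = c}" "inj_on e {0..n}"
      using card_le_inj[OF finite_atLeastAtMost fin_bool_lists] by blast
    define M where "M = (\<lambda>x. e (mz n x))"
    have mzle: "mz n x \<in> {0..n}" for x
    proof -
      have "mz n x \<le> n" unfolding mz_def by (rule Max.boundedI) auto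
      then show ?thesis by simp
    qed
    define Out where "Out = (\<lambda>m y. comp_AND (OMB n) (SOME x. x \<in> cube n \<and> M x = m) y)"
    show "\<exists>(M :: bool list \<Rightarrow> bool list) (Out :: bool list \<Rightarrow> bool list \<Rightarrow> bool).
      \<forall>x\<in>cube n. length (M x) = c \<and> (\<forall>y\<in>cube n. Out (M x) y = comp_AND (OMB n) x y)"
    proof (intro exI[of _ M] exI[of _ Out] ballI conjI)
      fix x assume x: "x \<in> cube n"
      show "length (M x) = c" using e mzle unfolding M_def by blast
      fix y assume y: "y \<in> cube n"
      define x' where "x' = (SOME x'. x' \<in> cube n \<and> M x' = M x)"
      have x': "x' \<in> cube n \<and> M x' = M x"
        unfolding x'_def by (rule someI[of _ x]) (use x in simp)
      then have "mz n x' = mz n x"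
        using e(2) mzle unfolding M_def inj_on_def by blast
      then show "Out (M x) y = comp_AND (OMB n) x y"
        unfolding Out_def x'_def[symmetric] using x x' y by (simp add: comp_mz)
    qed
  next
    fix c' assume "\<exists>(M :: bool list \<Rightarrow> bool list) (Out :: bool list \<Rightarrow> bool list \<Rightarrow> bool).
      \<forall>x\<in>cube n. length (M x) = c' \<and> (\<forall>y\<in>cube n. Out (M x) y = comp_AND (OMB n) x y)"
    then obtain M :: "bool list \<Rightarrow> bool list" and Out :: "bool list \<Rightarrow> bool list \<Rightarrow> bool"
      where h: "\<forall>x\<in>cube n. length (M x) = c' \<and> (\<forall>y\<in>cube n. Out (M x) y = comp_AND (OMB n) x y)"
      by blast
    have inj: "inj_on (\<lambda>t. M (ww n t)) {0..n}"
    proof (rule inj_onI)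
      fix t t' assume t: "t \<in> {0..n}" and t': "t' \<in> {0..n}" and eq: "M (ww n t) = M (ww n t')"
      show "t = t'"
      proof (rule ccontr)
        assume ne: "t \<noteq> t'"
        have key: "odd (max (mz n (ww n a)) (mz n (ww n (b - 1)))) = odd (max (mz n (ww n b)) (mz n (ww n (b - 1))))"
          if "a \<in> {0..n}" "b \<in> {0..n}" "M (ww n a) = M (ww n b)" for a b
        proof -
          have "Out (M (ww n a)) (ww n (b-1)) = Out (M (ww n b)) (ww n (b-1))" using that by simp
          moreover have "Out (M (ww n a)) (ww n (b-1)) = comp_AND (OMB n) (ww n a) (ww n (b-1))"
            using h ww_cube by blast
          moreover have "Out (M (ww n b)) (ww n (b-1)) = comp_AND (OMB n) (ww n b) (ww n (b-1))"
            using h ww_cube by blast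
          ultimately show ?thesis using ww_cube by (simp add: comp_mz)
        qed
        show False
        proof (cases "t < t'")
          case True
          then show ?thesis using key[OF t t' eq] t t' by (simp add: mz_ww)
        next
          case False
          then have "t' < t" using ne by simp
          then show ?thesis using key[OF t' t eq[symmetric]] t t' by (simp add: mz_ww)
        qed
      qed
    qed
    have "(\<lambda>t. M (ww n t)) ` {0..n} \<subseteq> {xs. length xs = c'}"
      using h ww_cube by auto
    then have "card ((\<lambda>t. M (ww n t)) ` {0..n}) \<le> card {xs :: bool list. length xs = c'}"
      by (rule card_mono[OF fin_bool_lists])
    then have "n + 1 \<le> 2 ^ c'" using card_image[OF inj] by (simp add: card_bool_lists)
    then show "c \<le> c'" unfolding c_def by (rule Least_le)
  qed
  then show ?thesis using ceil_log_eq[of c n] c1 c2 c3 by simp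
qed

theorem theorem4p1:
  fixes n :: nat
  assumes "n \<ge> 1"
  shows "NAADT n (OMB n) = n \<and>
         int (D_oneway (cube n) (cube n) (comp_AND (OMB n))) = \<lceil>log 2 (real n + 1)\<rceil>"
  using NAADT_part[OF assms] D_part[OF assms] by simp

end
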